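(* Let $C\in\mathbb R^3$ be a unit vector. The set $\Delta=\{(x\cdot y,\ x\cdot C,\ y\cdot C): x,y\in\mathbb S^2\}\subset\mathbb R^3$ is convex.
   Context: $\mathbb S^2$ is the unit sphere in $\mathbb R^3$ and $\cdot$ is the Euclidean inner product. *)

theory Defs
  imports "HOL-Analysis.Analysis"
begin

end

theory Submission
  imports Defs
begin
definition Q :: "real^3 \<Rightarrow> real \<Rightarrow> real \<Rightarrow> real \<Rightarrow> real" where
 "Q v z1 z2 z3 = z1^2+z2^2+z3^2 + 2*(v$1)*z1*z2 + 2*(v$2)*z1*z3 + 2*(v$3)*z2*z3"

lemma convP: "convex {v. \<forall>z1 z2 z3. 0 \<le> Q v z1 z2 z3}"
  unfolding convex_def
proof (intro allI impI ballI, clarify)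
  fix x y :: "real^3" and u v :: real and z1 z2 z3
  assume x: "\<forall>z1 z2 z3. 0 \<le> Q x z1 z2 z3" and y: "\<forall>z1 z2 z3. 0 \<le> Q y z1 z2 z3"
    and u: "0 \<le> u" "0 \<le> v" "u + v = 1"
  have "Q (u *\<^sub>R x + v *\<^sub>R y) z1 z2 z3 = u * Q x z1 z2 z3 + v * Q y z1 z2 z3"
    using u(3) unfolding Q_def by (simp add: algebra_simps) (smt (verit) distrib_left mult.commute mult.left_commute mult_cancel_left1)
  then show "0 \<le> Q (u *\<^sub>R x + v *\<^sub>R y) z1 z2 z3" using x y u by simp
qed

lemma inner3: "(vector [a,b,c] :: real^3) \<bullet> vector [d,e,f] = a*d+b*e+c*f"
  by (simp add: inner_vec_def sum_3 vector_3)

lemma e3: "axis 3 (1::real) = (vector [0,0,1] :: real^3)"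
  by (simp add: vec_eq_iff forall_3 vector_3 axis_def)

lemma norm1: "norm (x::real^3) = 1 \<longleftrightarrow> x \<bullet> x = 1"
  by (metis norm_eq_1)

lemma sub:
  assumes "norm C = 1" "x \<bullet> x = 1" "y \<bullet> y = 1"
  shows "0 \<le> Q (vector [x \<bullet> y, x \<bullet> C, y \<bullet> C]) z1 z2 z3"
proof -
  have "C \<bullet> C = 1" using assms by (metis norm_eq_1)
  hence "(z1 *\<^sub>R x + z2 *\<^sub>R y + z3 *\<^sub>R C) \<bullet> (z1 *\<^sub>R x + z2 *\<^sub>R y + z3 *\<^sub>R C)
    = Q (vector [x \<bullet> y, x \<bullet> C, y \<bullet> C]) z1 z2 z3"
    using assms unfolding Q_def by (simp add: vector_3 inner_add_left inner_add_right inner_commute algebra_simps power2_eq_square)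
  thus ?thesis by (metis inner_ge_zero)
qed
lemma sup:
  fixes C :: "real^3"
  assumes C: "norm C = 1" and P: "\<forall>z1 z2 z3. 0 \<le> Q v z1 z2 z3"
  shows "\<exists>x y. v = vector [x \<bullet> y, x \<bullet> C, y \<bullet> C] \<and> norm x = 1 \<and> norm y = 1"
proof -
  define t a b where "t = v$1" "a = v$2" "b = v$3"
  have Qe: "Q v z1 z2 z3 = z1^2+z2^2+z3^2 + 2*t*z1*z2 + 2*a*z1*z3 + 2*b*z2*z3" for z1 z2 z3
    unfolding Q_def t_a_b_def by simp
  have ha: "a^2 \<le> 1" using P[rule_format, of a 0 "-1"] unfolding Qe by (simp add: power2_eq_square)
  have hb: "b^2 \<le> 1" using P[rule_format, of 0 b "-1"] unfolding Qe by (simp add: power2_eq_square)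
  have h3: "0 \<le> (1-a^2)*((1-a^2)*(1-b^2)-(t-a*b)^2)"
    using P[rule_format, of "t-a*b" "-(1-a^2)" "-(a*(t-a*b) - b*(1-a^2))"] unfolding Qe
    by (simp add: power2_eq_square algebra_simps)
  have "\<exists>x0 y0::real^3. x0 \<bullet> x0 = 1 \<and> y0 \<bullet> y0 = 1 \<and> x0 \<bullet> y0 = t \<and> x0$3 = a \<and> y0$3 = b"
  proof (cases "a^2 < 1")
    case True
    define s where "s = sqrt (1-a^2)"
    have s: "s > 0" "s^2 = 1 - a^2" using True by (auto simp: s_def)
    define p where "p = (t-a*b)/s"
    have det: "(t-a*b)^2 \<le> (1-a^2)*(1-b^2)" using h3 True
      by (smt (verit) mult_nonneg_nonneg zero_le_mult_iff)
    have "p^2 = (t-a*b)^2/(1-a^2)" using s by (simp add: p_def power_divide)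
    also have "\<dots> \<le> 1-b^2" using det True by (simp add: divide_le_eq mult.commute)
    finally have pb: "p^2 \<le> 1 - b^2" .
    define q where "q = sqrt (1-b^2-p^2)"
    have q: "q^2 = 1-b^2-p^2" using pb by (simp add: q_def)
    have sp: "s*p = t - a*b" using s by (simp add: p_def)
    show ?thesis
      apply (rule exI[of _ "vector [s,0,a]"], rule exI[of _ "vector [p,q,b]"])
      using s q sp by (simp add: inner3 vector_3 power2_eq_square algebra_simps)
  next
    case False
    hence a1: "a^2 = 1" using ha by simp
    define d where "d = t - a*b"
    have QQ: "Q v 1 w (-(a + b*w)) = (1-a^2) + (1-b^2)*w^2 + 2*w*d" for w
      unfolding Qe d_def by (simp add: power2_eq_square algebra_simps)
    have "0 \<le> Q v 1 (-d/2) (-(a + b*(-d/2)))" using P by blast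
    hence "0 \<le> (1-b^2)*(-d/2)^2 + 2*(-d/2)*d" by (simp only: QQ a1)
    moreover have "(1-b^2)*(-d/2)^2 + 2*(-d/2)*d = (1-b^2)*d^2/4 - d^2"
      by (simp add: power2_eq_square field_simps)
    moreover have "(1-b^2)*d^2 \<le> d^2" using hb
      by (intro mult_left_le_one_le) auto
    ultimately have "d^2 \<le> 0" by linarith
    hence "d = 0" by simp
    hence tab: "t = a*b" by (simp add: d_def)
    show ?thesis
      apply (rule exI[of _ "vector [0,0,a]"], rule exI[of _ "vector [sqrt(1-b^2),0,b]"])
      using a1 hb tab by (simp add: inner3 vector_3 power2_eq_square algebra_simps)
  qed
  then obtain x0 y0 :: "real^3" where xy: "x0 \<bullet> x0 = 1" "y0 \<bullet> y0 = 1" "x0 \<bullet> y0 = t" "x0$3 = a" "y0$3 = b"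
    by blast
  obtain f where f: "orthogonal_transformation f" "f (axis (3::3) (1::real)) = C"
    using orthogonal_transformation_exists[of "axis (3::3) (1::real)" C] C by auto
  have fi: "f u \<bullet> f w = u \<bullet> w" for u w using f(1) unfolding orthogonal_transformation_def by blast
  have "v = vector [t,a,b]" unfolding t_a_b_def by (simp add: vec_eq_iff forall_3 vector_3)
  moreover have "f x0 \<bullet> f y0 = t" "f x0 \<bullet> C = a" "f y0 \<bullet> C = b"
    using xy f(2)[symmetric] by (simp_all add: fi inner_axis)
  moreover have "norm (f x0) = 1" "norm (f y0) = 1" using xy by (simp_all add: norm_eq_1 fi)
  ultimately show ?thesis by metis
qed
theorem mainTheorem5:
  fixes C :: "real ^ 3"
  assumes "norm C = 1"
  shows "convex {vector [x \<bullet> y, x \<bullet> C, y \<bullet> C] :: real ^ 3 | x y :: real ^ 3.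
                   norm x = 1 \<and> norm y = 1}"
proof -
  have "{vector [x \<bullet> y, x \<bullet> C, y \<bullet> C] :: real ^ 3 | x y :: real ^ 3.
                   norm x = 1 \<and> norm y = 1} = {v. \<forall>z1 z2 z3. 0 \<le> Q v z1 z2 z3}"
  proof
    show "{vector [x \<bullet> y, x \<bullet> C, y \<bullet> C] :: real ^ 3 | x y :: real ^ 3.
                   norm x = 1 \<and> norm y = 1} \<subseteq> {v. \<forall>z1 z2 z3. 0 \<le> Q v z1 z2 z3}"
      using sub[OF assms] by (auto simp: norm_eq_1)
    show "{v. \<forall>z1 z2 z3. 0 \<le> Q v z1 z2 z3} \<subseteq> {vector [x \<bullet> y, x \<bullet> C, y \<bullet> C] :: real ^ 3 | x y :: real ^ 3.
                   norm x = 1 \<and> norm y = 1}"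
      using sup[OF assms] by blast
  qed
  thus ?thesis using convP by simp
qed

end
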